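(* Let $f(z)=\sum_{k\ge0}f_kz^k$ be holomorphic on the open unit disk, let $0<r<1$, and suppose that $f-P_n$ has $N$ zeros (counted with multiplicity) in $\overline\Delta_r=\{|z|\le r\}$, where $P_n$ is a polynomial of degree at most $n$. There exist positive constants $A\ge1$, $a<1$ and $\delta$, depending only on $r$, such that: if $N\ge A(n+1)$, then $$|f_k|\le\frac{M(R,f)}{R_+^{\,n+1}}\,a^N$$ for all integers $k$ with $n<k\le\delta N$ and every $R\ge (r+2)/3$ such that $f$ is holomorphic on a neighborhood of $\overline\Delta_R$.
   Context: $M(R,f)=\max\{|f(z)|:|z|=R\}$ and $R_+=\max\{R,1\}$. *)

theory Defs
  imports "HOL-Complex_Analysis.Complex_Analysis" "HOL-Computational_Algebra.Polynomial"
begin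

definition max_mod :: "real \<Rightarrow> (complex \<Rightarrow> complex) \<Rightarrow> real" where
  "max_mod R f = Sup ((\<lambda>z. norm (f z)) ` sphere 0 R)"

definition zero_count :: "(complex \<Rightarrow> complex) \<Rightarrow> complex set \<Rightarrow> nat" where
  "zero_count g S = (\<Sum>z\<in>{z\<in>S. g z = 0}. nat (zorder g z))"

definition taylor_coeff :: "(complex \<Rightarrow> complex) \<Rightarrow> nat \<Rightarrow> complex" where
  "taylor_coeff f k = (deriv ^^ k) f 0 / of_nat (fact k)"

end

theory Submission
  imports Defs
begin


lemma higher_deriv_poly: "(deriv ^^ k) (poly P) = poly ((pderiv ^^ k) (P :: complex poly))"
proof (induction k)
  case 0 then show ?case by simp
next
  case (Suc k)
  show ?case
    by (simp add: Suc fun_eq_iff DERIV_imp_deriv[OF poly_DERIV])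
qed

lemma pderiv_funpow_degree: "degree ((pderiv ^^ k) (P :: complex poly)) = degree P - k"
  by (induction k) (auto simp add: degree_pderiv)

lemma pderiv_funpow_zero:
  assumes "degree P < k" shows "(pderiv ^^ k) (P :: complex poly) = 0"
proof -
  obtain j where k: "k = Suc (degree P) + j" using assms less_iff_Suc_add by auto
  have d: "degree ((pderiv ^^ degree P) P) = 0" by (simp add: pderiv_funpow_degree)
  have "(pderiv ^^ (Suc (degree P) + i)) P = 0" for i
  proof (induction i)
    case 0 then show ?case using d by (simp add: pderiv_eq_0_iff)
  next
    case (Suc i) then show ?case by simp
  qed
  then show ?thesis using k by simp
qed

lemma taylor_coeff_sub_poly:
  assumes "f holomorphic_on S" "open S" "0 \<in> S" "degree P < k"
  shows "taylor_coeff (\<lambda>z. f z - poly P z) k = taylor_coeff f k"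
proof -
  have "(deriv ^^ k) (\<lambda>z. f z - poly P z) 0 = (deriv ^^ k) f 0 - (deriv ^^ k) (poly P) 0"
    by (rule higher_deriv_diff) (use assms in \<open>auto intro: holomorphic_intros\<close>)
  also have "(deriv ^^ k) (poly P) 0 = 0"
    using assms(4) by (simp add: higher_deriv_poly pderiv_funpow_zero)
  finally show ?thesis by (simp add: taylor_coeff_def)
qed



lemma poly_sum_n:
  fixes P :: "complex poly"
  assumes "degree P \<le> n"
  shows "poly P x = (\<Sum>i\<le>n. coeff P i * x ^ i)"
  using assms by (auto simp: poly_altdef intro!: sum.mono_neutral_left coeff_eq_0)

lemma bernstein_walsh:
  fixes P :: "complex poly"
  assumes "degree P \<le> n" "0 < r'" "r' \<le> R"
    and B: "\<And>z. z \<in> cball 0 r' \<Longrightarrow> norm (poly P z) \<le> B"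
    and u: "norm u \<le> R"
  shows "norm (poly P u) \<le> (R / r') ^ n * B"
proof -
  have B0: "0 \<le> B" using B[of 0] assms(2) by (auto intro: order_trans[OF norm_ge_zero])
  have X1: "1 \<le> (R / r') ^ n" using assms(2,3) by (simp add: one_le_power)
  show ?thesis
  proof (cases "norm u \<le> r'")
    case True
    then have "norm (poly P u) \<le> B" using B by simp
    also have "\<dots> \<le> (R / r') ^ n * B" using X1 B0 by (simp add: mult_left_le_one_le mult_le_cancel_right1)
    finally show ?thesis .
  next
    case False
    then have u0: "u \<noteq> 0" using assms(2) by auto
    define Q where "Q = (\<lambda>w. \<Sum>i\<le>n. coeff P i * w ^ (n - i))"
    have Qeq: "Q w = w ^ n * poly P (1 / w)" if "w \<noteq> 0" for w
    proof -
      have "w ^ n * poly P (1 / w) = (\<Sum>i\<le>n. coeff P i * (w ^ n * (1 / w) ^ i))"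
        by (simp add: poly_sum_n[OF assms(1)] sum_distrib_left algebra_simps)
      also have "\<dots> = Q w" unfolding Q_def
        by (rule sum.cong) (use that in \<open>auto simp: power_diff power_one_over field_simps\<close>)
      finally show ?thesis by simp
    qed
    have holQ: "Q holomorphic_on UNIV" unfolding Q_def by (intro holomorphic_intros)
    have "norm (Q (1 / u)) \<le> B / r' ^ n"
    proof (rule maximum_modulus_frontier[of Q "cball 0 (1 / r')"])
      show "Q holomorphic_on interior (cball 0 (1 / r'))" using holQ by (rule holomorphic_on_subset) auto
      show "continuous_on (closure (cball 0 (1 / r'))) Q"
        using holomorphic_on_imp_continuous_on[OF holQ] continuous_on_subset by blast
      show "bounded (cball 0 (1 / r'))" by simp
      show "1 / u \<in> cball 0 (1 / r')" using False assms(2)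
        by (simp add: norm_divide frac_le)
    next
      fix w :: complex assume "w \<in> frontier (cball 0 (1 / r'))"
      then have w: "norm w = 1 / r'" using assms(2) by simp
      then have w0: "w \<noteq> 0" using assms(2) by auto
      have "norm (Q w) = norm w ^ n * norm (poly P (1 / w))" by (simp add: Qeq[OF w0] norm_mult norm_power)
      also have "\<dots> \<le> norm w ^ n * B"
        using B[of "1/w"] w assms(2) by (intro mult_left_mono) (auto simp: norm_divide)
      also have "\<dots> = B / r' ^ n" using w by (simp add: power_one_over)
      finally show "norm (Q w) \<le> B / r' ^ n" .
    qed
    moreover have "poly P u = u ^ n * Q (1 / u)" using Qeq[of "1/u"] u0 by (simp add: field_simps)
    ultimately have "norm (poly P u) \<le> norm u ^ n * (B / r' ^ n)"
      by (metis mult_left_mono norm_ge_zero norm_mult norm_power zero_le_power)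
    also have "\<dots> \<le> R ^ n * (B / r' ^ n)"
      using u B0 assms(2) by (intro mult_right_mono power_mono) auto
    also have "\<dots> = (R / r') ^ n * B" by (simp add: power_divide)
    finally show ?thesis .
  qed
qed



lemma fin_zeros:
  assumes "g holomorphic_on ball 0 Rb" "\<exists>z\<in>ball 0 Rb. g z \<noteq> 0" "r < Rb"
  shows "finite {z\<in>cball 0 r. g z = 0}"
proof (cases "g constant_on ball 0 Rb")
  case True
  then obtain c where c: "\<And>z. z \<in> ball 0 Rb \<Longrightarrow> g z = c" by (auto simp: constant_on_def)
  with assms(2) have "c \<noteq> 0" by auto
  with c assms(3) have "{z\<in>cball 0 r. g z = 0} = {}" by auto
  then show ?thesis by (metis finite.emptyI)
next
  case False
  show ?thesis
    by (rule holomorphic_compact_finite_zeros[OF assms(1) _ _ _ _ False]) (use assms(3) in auto)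
qed

lemma max_mod_ball:
  assumes "g holomorphic_on S" "cball 0 R \<subseteq> S" "open S" "0 < R"
    and "\<And>u. u \<in> sphere 0 R \<Longrightarrow> norm (g u) \<le> B" "z \<in> cball 0 R"
  shows "norm (g z) \<le> B"
proof (rule maximum_modulus_frontier[of g "cball 0 R"])
  show "g holomorphic_on interior (cball 0 R)" using assms(1,2) ball_subset_cball by (metis holomorphic_on_subset order_trans interior_cball)
  show "continuous_on (closure (cball 0 R)) g"
    using assms holomorphic_on_imp_continuous_on holomorphic_on_subset by (metis closure_closed closed_cball)
qed (use assms in auto)

lemma key:
  fixes R Rb r r' c B :: real and g :: "complex \<Rightarrow> complex" and m :: nat
  assumes r: "0 < r" "r < R" "R < Rb" "r * Rb \<le> R^2" "0 < r'" "r' \<le> R" "0 \<le> c"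
    and cb: "\<And>w z. norm w \<le> r \<Longrightarrow> norm z \<le> r' \<Longrightarrow>
       R * norm (z - w) \<le> c * norm (complex_of_real (R^2) - cnj w * z)"
  shows "card {z\<in>cball 0 r. g z = 0} = m \<Longrightarrow> g holomorphic_on ball 0 Rb \<Longrightarrow>
    (\<exists>z\<in>ball 0 Rb. g z \<noteq> 0) \<Longrightarrow> (\<And>u. u \<in> sphere 0 R \<Longrightarrow> norm (g u) \<le> B) \<Longrightarrow>
    z \<in> cball 0 r' \<Longrightarrow> norm (g z) \<le> c ^ zero_count g (cball 0 r) * B"
proof (induction m arbitrary: g z)
  case 0
  have fin: "finite {z\<in>cball 0 r. g z = 0}" using fin_zeros[OF 0(2,3)] r by simp
  hence "{z\<in>cball 0 r. g z = 0} = {}" using 0(1) by simp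
  hence "zero_count g (cball 0 r) = 0" unfolding zero_count_def by (metis sum.empty)
  moreover have "norm (g z) \<le> B"
    by (rule max_mod_ball[of g "ball 0 Rb" R B z]) (use 0 r in auto)
  ultimately show ?case by simp
next
  case (Suc m)
  define Z where "Z = {z\<in>cball 0 r. g z = 0}"
  have fin: "finite Z" using fin_zeros[OF Suc.prems(2,3)] r by (simp add: Z_def)
  have "Z \<noteq> {}" using Suc.prems(1) unfolding Z_def by (metis card.empty nat.distinct(1))
  then obtain w where wZ: "w \<in> Z" by auto
  hence w: "norm w \<le> r" "g w = 0" by (auto simp: Z_def)
  have wB: "w \<in> ball 0 Rb" using w r by auto
  have B0: "0 \<le> B" using Suc.prems(4)[of "of_real R"] r by (auto intro: order_trans[OF norm_ge_zero])
  obtain e h where e: "0 < e" "cball w e \<subseteq> ball 0 Rb" and hol_h: "h holomorphic_on cball w e"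
     and gh: "\<And>u. u \<in> cball w e \<Longrightarrow> g u = h u * (u - w) ^ nat (zorder g w) \<and> h u \<noteq> 0"
    using zorder_exist_zero[of g "ball 0 Rb" w] Suc.prems(2,3) wB w(2) by auto
  define k where "k = nat (zorder g w)"
  define \<phi> where "\<phi> = (\<lambda>u. (complex_of_real (R^2) - cnj w * u) / complex_of_real R)"
  have \<phi>nz: "\<phi> u \<noteq> 0" if "u \<in> ball 0 Rb" for u
  proof -
    have "norm (cnj w * u) < R^2"
    proof (cases "w = 0")
      case True then show ?thesis using r by simp
    next
      case False
      have "norm (cnj w * u) = norm w * norm u" by (simp add: norm_mult)
      also have "\<dots> < norm w * Rb" using False that by (intro mult_strict_left_mono) auto
      also have "\<dots> \<le> r * Rb" using w r by (intro mult_right_mono) auto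
      finally show ?thesis using r by simp
    qed
    then have "complex_of_real (R^2) - cnj w * u \<noteq> 0"
      by (metis eq_iff_diff_eq_0 norm_of_real order_less_irrefl power2_abs abs_of_nonneg zero_le_power2 abs_power2)
    then show ?thesis using r by (simp add: \<phi>_def)
  qed
  have \<phi>_sphere: "norm (\<phi> u) = norm (u - w)" if "u \<in> sphere 0 R" for u
  proof -
    have "complex_of_real (R^2) = u * cnj u" using that complex_norm_square[of u] by simp
    hence "complex_of_real (R^2) - cnj w * u = u * cnj (u - w)" by (simp add: algebra_simps)
    hence "norm (complex_of_real (R^2) - cnj w * u) = R * norm (u - w)" using that by (metis complex_mod_cnj mem_sphere_0 norm_mult)
    thus ?thesis using r by (simp add: \<phi>_def norm_divide)
  qed
  define g1 where "g1 = (\<lambda>u. if u = w then h w * \<phi> w ^ k else g u * (\<phi> u / (u - w)) ^ k)"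
  have g1_far: "g1 u = g u * (\<phi> u / (u - w)) ^ k" if "u \<noteq> w" for u using that by (simp add: g1_def)
  have g1_near: "g1 u = h u * \<phi> u ^ k" if "u \<in> cball w e" for u
  proof (cases "u = w")
    case False
    then show ?thesis using gh[OF that] by (simp add: g1_far k_def power_divide)
  qed (simp add: g1_def)
  have hol1: "g1 holomorphic_on ball 0 Rb"
  proof -
    have "g1 holomorphic_on (ball 0 Rb - {w})"
    proof (rule holomorphic_transform[of "\<lambda>u. g u * (\<phi> u / (u - w)) ^ k"])
      show "(\<lambda>u. g u * (\<phi> u / (u - w)) ^ k) holomorphic_on ball 0 Rb - {w}"
        unfolding \<phi>_def by (intro holomorphic_intros holomorphic_on_subset[OF Suc.prems(2)]) auto
    qed (simp add: g1_far)
    moreover have "g1 holomorphic_on ball w e"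
    proof (rule holomorphic_transform[of "\<lambda>u. h u * \<phi> u ^ k"])
      show "(\<lambda>u. h u * \<phi> u ^ k) holomorphic_on ball w e"
        unfolding \<phi>_def by (intro holomorphic_intros holomorphic_on_subset[OF hol_h]) auto
    qed (simp add: g1_near)
    ultimately have "g1 holomorphic_on (ball 0 Rb - {w}) \<union> ball w e"
      by (intro holomorphic_on_Un) auto
    moreover have "ball 0 Rb \<subseteq> (ball 0 Rb - {w}) \<union> ball w e" using e by auto
    ultimately show ?thesis by (rule holomorphic_on_subset)
  qed
  have wit1: "\<exists>z\<in>ball 0 Rb. g1 z \<noteq> 0"
  proof -
    obtain z0 where z0: "z0 \<in> ball 0 Rb" "g z0 \<noteq> 0" using Suc.prems(3) by auto
    hence "z0 \<noteq> w" using w by auto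
    thus ?thesis using z0 \<phi>nz[OF z0(1)] by (intro bexI[of _ z0]) (auto simp: g1_far)
  qed
  have sph1: "norm (g1 u) \<le> B" if "u \<in> sphere 0 R" for u
  proof -
    have "u \<noteq> w" using that w r by auto
    hence "norm (g1 u) = norm (g u) * (norm (\<phi> u) / norm (u - w)) ^ k"
      by (simp add: g1_far norm_mult norm_power norm_divide)
    also have "\<dots> = norm (g u)" using \<phi>_sphere[OF that] \<open>u \<noteq> w\<close> by simp
    finally show ?thesis using Suc.prems(4)[OF that] by simp
  qed
  have Z1: "{z\<in>cball 0 r. g1 z = 0} = Z - {w}"
  proof -
    have "g1 w \<noteq> 0" using gh[of w] \<phi>nz[OF wB] e by (simp add: g1_def)
    moreover have "g1 z = 0 \<longleftrightarrow> g z = 0" if "z \<in> cball 0 r" "z \<noteq> w" for z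
      using that \<phi>nz[of z] r by (auto simp: g1_far)
    ultimately show ?thesis by (auto simp: Z_def)
  qed
  have card1: "card {z\<in>cball 0 r. g1 z = 0} = m"
    using Z1 Suc.prems(1) wZ fin by (simp add: Z_def)
  have zo: "zorder g1 z = zorder g z" if "z \<in> Z - {w}" for z
  proof -
    have zin: "z \<in> ball 0 Rb" "z \<noteq> w" "g z = 0" using that r by (auto simp: Z_def)
    obtain e' hz where e': "0 < e'" "cball z e' \<subseteq> ball 0 Rb" and hol_hz: "hz holomorphic_on cball z e'"
      and ghz: "\<And>u. u \<in> cball z e' \<Longrightarrow> g u = hz u * (u - z) ^ nat (zorder g z) \<and> hz u \<noteq> 0"
      and zp: "zorder g z > 0"
      using zorder_exist_zero[of g "ball 0 Rb" z] Suc.prems(2,3) zin by auto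
    define S' where "S' = ball z e' - {w}"
    show ?thesis
    proof (rule zorder_eqI[of S' z "\<lambda>u. hz u * (\<phi> u / (u - w)) ^ k"])
      show "open S'" by (simp add: S'_def open_Diff)
      show "z \<in> S'" using e' zin by (simp add: S'_def)
      show "(\<lambda>u. hz u * (\<phi> u / (u - w)) ^ k) holomorphic_on S'"
        unfolding S'_def \<phi>_def by (intro holomorphic_intros holomorphic_on_subset[OF hol_hz]) auto
      show "hz z * (\<phi> z / (z - w)) ^ k \<noteq> 0" using ghz[of z] e' \<phi>nz[OF zin(1)] zin(2) by simp
    next
      fix u assume "u \<in> S'" "u \<noteq> z"
      hence u: "u \<in> cball z e'" "u \<noteq> w" by (auto simp: S'_def)
      have "g1 u = hz u * (u - z) ^ nat (zorder g z) * (\<phi> u / (u - w)) ^ k"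
        using ghz[OF u(1)] g1_far[OF u(2)] by simp
      also have "(u - z) ^ nat (zorder g z) = (u - z) powi zorder g z"
        using zp by (simp add: power_int_def)
      finally show "g1 u = hz u * (\<phi> u / (u - w)) ^ k * (u - z) powi zorder g z"
        by (simp add: algebra_simps)
    qed
  qed
  have zc: "zero_count g (cball 0 r) = k + zero_count g1 (cball 0 r)"
  proof -
    have "zero_count g (cball 0 r) = (\<Sum>z\<in>Z. nat (zorder g z))" by (simp add: zero_count_def Z_def)
    also have "\<dots> = nat (zorder g w) + (\<Sum>z\<in>Z-{w}. nat (zorder g z))" using fin wZ by (rule sum.remove)
    also have "(\<Sum>z\<in>Z-{w}. nat (zorder g z)) = (\<Sum>z\<in>Z-{w}. nat (zorder g1 z))"
      using zo by (intro sum.cong) auto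
    also have "\<dots> = zero_count g1 (cball 0 r)" unfolding zero_count_def Z1 ..
    finally show ?thesis by (simp add: k_def)
  qed
  have IH: "norm (g1 z) \<le> c ^ zero_count g1 (cball 0 r) * B"
    by (rule Suc.IH[OF card1 hol1 wit1 sph1 Suc.prems(5)])
  show ?case
  proof (cases "z = w")
    case True
    then show ?thesis using w B0 r by simp
  next
    case False
    have zB: "z \<in> ball 0 Rb" using Suc.prems(5) r by auto
    have geq: "g z = g1 z * ((z - w) / \<phi> z) ^ k"
      using g1_far[OF False] \<phi>nz[OF zB] False by (simp add: field_simps power_divide)
    have nq: "norm ((z - w) / \<phi> z) \<le> c"
    proof -
      have pos: "0 < norm (complex_of_real (R^2) - cnj w * z)" using \<phi>nz[OF zB] by (simp add: \<phi>_def)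
      have "norm ((z - w) / \<phi> z) = R * norm (z - w) / norm (complex_of_real (R^2) - cnj w * z)"
        using r by (simp add: \<phi>_def norm_divide norm_mult)
      also have "\<dots> \<le> c" using cb[of w z] w Suc.prems(5) pos by (simp add: divide_le_eq)
      finally show ?thesis .
    qed
    have "norm (g z) = norm (g1 z) * norm ((z - w) / \<phi> z) ^ k" using geq by (simp add: norm_mult norm_power)
    also have "\<dots> \<le> (c ^ zero_count g1 (cball 0 r) * B) * c ^ k"
      using IH nq B0 r by (intro mult_mono power_mono) auto
    also have "\<dots> = c ^ zero_count g (cball 0 r) * B" by (simp add: zc power_add algebra_simps)
    finally show ?thesis .
  qed
qed



lemma frac_le_cross:
  fixes a b c d :: real
  assumes "0 < b" "0 < d" "a * d \<le> c * b"
  shows "a / b \<le> c / d"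
  using assms by (simp add: divide_le_eq le_divide_eq field_simps)

lemma numeric:
  fixes cR c R R' t r' :: real and j n k N mm :: nat
  assumes "0 \<le> cR" "cR \<le> c" "cR * R' \<le> c" "0 < R" "R \<le> R'" "0 < t" "t < 1" "c = t^4"
    "t^j < r'" "r' < 1" "real j * (real n + real k) \<le> real N" "2*n+1 \<le> N" "t^mm < 1/4" "mm \<le> N"
  shows "4 * cR^N * R^n * R'^(n+1) \<le> t^(2*N) * r'^(n+k)" and "(R/r')^n * cR^N \<le> 1/4"
proof -
  have r'0: "0 < r'" using assms(6,9) by (meson order_le_less_trans zero_le_power less_imp_le)
  have R'0: "0 < R'" using assms by linarith
  have jnk: "j * (n + k) \<le> N" using assms(11) by (metis of_nat_add of_nat_le_iff of_nat_mult)
  have tN: "t^N \<le> r'^(n+k)"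
  proof -
    have "t^N \<le> t^(j*(n+k))" using jnk assms(6,7) by (intro power_decreasing) auto
    also have "\<dots> = (t^j)^(n+k)" by (simp add: power_mult)
    also have "\<dots> \<le> r'^(n+k)" using assms(6,9) by (intro power_mono) auto
    finally show ?thesis .
  qed
  have tN4: "t^N \<le> 1/4"
    using assms(6,7,13,14) power_decreasing[of mm N t] by linarith
  have cpow: "cR^N * R'^m \<le> c^N" if "m \<le> N" for m
  proof -
    have "cR^N * R'^m = (cR * R')^m * cR^(N-m)"
      using that by (simp add: power_mult_distrib power_add[symmetric] algebra_simps flip: power_add)
    also have "\<dots> \<le> c^m * c^(N-m)"
      using assms R'0 by (intro mult_mono power_mono) auto
    also have "\<dots> = c^N" using that by (simp flip: power_add)
    finally show ?thesis .
  qed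
  have "4 * cR^N * R^n * R'^(n+1) \<le> 4 * cR^N * R'^n * R'^(n+1)"
    using assms R'0 by (intro mult_mono power_mono mult_left_mono) auto
  also have "\<dots> = 4 * (cR^N * R'^(2*n+1))"
  proof -
    have e: "R'^n * R'^(n+1) = R'^(2*n+1)" by (metis power_add mult_2 add.assoc)
    show ?thesis unfolding e[symmetric] by (simp add: algebra_simps)
  qed
  also have "\<dots> \<le> 4 * c^N" using cpow[OF assms(12)] by simp
  also have "\<dots> = 4 * t^N * t^(2*N) * t^N" using assms(8) by (simp flip: power_mult power_add)
  also have "\<dots> \<le> 1 * t^(2*N) * r'^(n+k)"
    using tN tN4 assms(6) by (intro mult_mono) auto
  finally show "4 * cR^N * R^n * R'^(n+1) \<le> t^(2*N) * r'^(n+k)" by simp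
  have "(R/r')^n * cR^N \<le> (R'/r')^n * cR^N"
    using assms r'0 by (intro mult_right_mono power_mono divide_right_mono) auto
  also have "\<dots> = (cR^N * R'^n) / r'^n" by (simp add: power_divide)
  also have "\<dots> \<le> c^N / r'^n" using cpow[of n] assms(12) r'0 by (intro divide_right_mono) auto
  also have "\<dots> \<le> c^N / t^N"
  proof (rule divide_left_mono)
    have "r'^(n+k) \<le> r'^n" using r'0 assms(10) by (intro power_decreasing) auto
    then show "t^N \<le> r'^n" using tN by linarith
  qed (use assms r'0 in auto)
  also have "\<dots> = t^N * t^N * t^N"
  proof -
    have "c^N = (t^N)^4" by (simp add: assms(8) flip: power_mult) (simp add: mult.commute)
    then show ?thesis using assms(6) by (simp add: power4_eq_xxxx)
  qed
  also have "\<dots> \<le> 1 * 1 * (1/4)" using tN4 assms(6,7) by (intro mult_mono) (auto simp: power_le_one)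
  finally show "(R/r')^n * cR^N \<le> 1/4" by simp
qed



lemma max_mod_upper:
  assumes "continuous_on (sphere 0 R) h" "u \<in> sphere 0 R"
  shows "norm (h u) \<le> max_mod R h"
  unfolding max_mod_def
proof (rule cSup_upper)
  show "norm (h u) \<in> (\<lambda>z. norm (h z)) ` sphere 0 R" using assms(2) by auto
  have "compact ((\<lambda>z. norm (h z)) ` sphere 0 R)"
    by (intro compact_continuous_image continuous_on_norm assms(1)) auto
  then show "bdd_above ((\<lambda>z. norm (h z)) ` sphere 0 R)"
    by (intro bounded_imp_bdd_above compact_imp_bounded)
qed

lemma max_mod_least:
  assumes "0 \<le> R" "\<And>u. u \<in> sphere 0 R \<Longrightarrow> norm (h u) \<le> B"
  shows "max_mod R h \<le> B"
  unfolding max_mod_def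
proof (rule cSup_least)
  have "complex_of_real R \<in> sphere 0 R" using assms(1) by simp
  then show "(\<lambda>z. norm (h z)) ` sphere 0 R \<noteq> {}" by blast
qed (use assms in auto)

lemma ball_in_open:
  fixes S :: "complex set"
  assumes "open S" "cball 0 R \<subseteq> S" "0 < R"
  obtains R1 where "R < R1" "ball 0 R1 \<subseteq> S"
proof -
  obtain \<epsilon> where e: "\<epsilon> > 0" "(\<Union>x\<in>cball 0 R. ball x \<epsilon>) \<subseteq> S"
    using compact_subset_open_imp_ball_epsilon_subset[OF compact_cball assms(1,2)] by blast
  have "ball 0 (R + \<epsilon>) \<subseteq> S"
  proof
    fix y :: complex assume y: "y \<in> ball 0 (R + \<epsilon>)"
    show "y \<in> S"
    proof (cases "norm y \<le> R")
      case True
      then show ?thesis using e by (force simp: dist_norm)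
    next
      case False
      define x where "x = (R / norm y) *\<^sub>R y"
      have ny: "norm y > 0" using False assms(3) by linarith
      have "norm x = R" using ny assms(3) by (simp add: x_def)
      moreover have "dist x y = norm y - R"
      proof -
        have "y - x = (1 - R / norm y) *\<^sub>R y" by (simp add: x_def algebra_simps)
        then have "norm (y - x) = \<bar>1 - R / norm y\<bar> * norm y" by simp
        also have "\<dots> = norm y - R" using ny False by (simp add: field_simps abs_if)
        finally show ?thesis by (simp add: dist_norm norm_minus_commute)
      qed
      ultimately show ?thesis using e y by (force simp: dist_norm)
    qed
  qed
  then show ?thesis using e(1) that[of "R + \<epsilon>"] by auto
qed



theorem lemma2p2:
  fixes r :: real
  assumes "0 < r" "r < 1"
  shows "\<exists>A a \<delta>. A \<ge> 1 \<and> 0 < a \<and> a < 1 \<and> \<delta> > 0 \<and>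
    (\<forall>(f :: complex \<Rightarrow> complex) (P :: complex poly) (n :: nat) (N :: nat) (k :: nat) (R :: real).
       f holomorphic_on ball 0 1 \<longrightarrow>
       (\<exists>z\<in>ball 0 1. f z \<noteq> poly P z) \<longrightarrow>
       degree P \<le> n \<longrightarrow>
       N = zero_count (\<lambda>z. f z - poly P z) (cball 0 r) \<longrightarrow>
       real N \<ge> A * (real n + 1) \<longrightarrow>
       n < k \<longrightarrow> real k \<le> \<delta> * real N \<longrightarrow>
       R \<ge> (r + 2) / 3 \<longrightarrow>
       (\<exists>S. open S \<and> cball 0 R \<subseteq> S \<and> f holomorphic_on S) \<longrightarrow>
       norm (taylor_coeff f k) \<le> max_mod R f / (max R 1) ^ (n + 1) * a ^ N)"
proof -
  define \<rho> where "\<rho> = (r + 2) / 3"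
  define r' where "r' = \<rho> * (\<rho> - r) / (2 * (\<rho> + r))"
  define c where "c = \<rho> * (r' + r) / (\<rho>^2 - r * r')"
  have \<rho>: "r < \<rho>" "\<rho> < 1" "0 < \<rho>" using assms by (auto simp: \<rho>_def)
  have r'0: "0 < r'" using \<rho> assms by (simp add: r'_def)
  have r'\<rho>: "r' < \<rho>"
  proof -
    have "(\<rho> - r) / (2 * (\<rho> + r)) < 1" using \<rho> assms by (simp add: divide_less_eq)
    then have "\<rho> * ((\<rho> - r) / (2 * (\<rho> + r))) < \<rho> * 1" using \<rho> by (intro mult_strict_left_mono) auto
    then show ?thesis by (simp add: r'_def)
  qed
  have r'1: "r' < 1" using r'\<rho> \<rho> by linarith
  have den: "0 < \<rho>^2 - r * r'"
  proof -
    have "r * r' < \<rho> * \<rho>" using \<rho> r'0 r'\<rho> assms by (intro mult_strict_mono) auto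
    then show ?thesis by (simp add: power2_eq_square)
  qed
  have c0: "0 < c" using den \<rho> r'0 assms by (simp add: c_def)
  have c1: "c < 1"
  proof -
    have eq: "r' * (\<rho> + r) = \<rho> * (\<rho> - r) / 2" using \<rho> assms by (simp add: r'_def field_simps)
    have "\<rho> * (r' + r) < \<rho>^2 - r * r'"
    proof -
      have "\<rho> * (r' + r) + r * r' = r' * (\<rho> + r) + \<rho> * r" by (simp add: algebra_simps)
      also have "\<dots> = \<rho> * (\<rho> - r) / 2 + \<rho> * r" by (simp add: eq)
      also have "\<dots> < \<rho>^2" using \<rho> assms by (simp add: power2_eq_square field_simps)
      finally show ?thesis by simp
    qed
    then show ?thesis using den by (simp add: c_def divide_less_eq)
  qed
  define t where "t = sqrt (sqrt c)"
  have t2: "t^2 = sqrt c" using c0 by (simp add: t_def)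
  have t4: "t^4 = (t^2)^2" by (simp flip: power_mult)
  have t: "0 < t" "t < 1" "c = t^4" using c0 c1 t2 t4 by (auto simp: t_def)
  obtain j where j: "t^j < r'" using real_arch_pow_inv[OF r'0 t(2)] by blast
  have j0: "0 < j" using j r'1 by (cases j) auto
  obtain mm where mm: "t^mm < 1/4" using real_arch_pow_inv[of "1/4" t] t by auto
  define A where "A = max 2 (real mm)"
  define \<delta> where "\<delta> = 1 / (2 * real j)"
  have main: "norm (taylor_coeff f k) \<le> max_mod R f / (max R 1) ^ (n + 1) * (t^2) ^ N"
    if hf: "f holomorphic_on ball 0 1" and wit: "\<exists>z\<in>ball 0 1. f z \<noteq> poly P z"
      and dP: "degree P \<le> n" and hN: "N = zero_count (\<lambda>z. f z - poly P z) (cball 0 r)"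
      and NA: "A * (real n + 1) \<le> real N" and nk: "n < k" and kd: "real k \<le> \<delta> * real N"
      and hR: "(r + 2) / 3 \<le> R" and hS: "open S" "cball 0 R \<subseteq> S" "f holomorphic_on S"
    for f P n N k R S
  proof -
    define g where "g = (\<lambda>z. f z - poly P z)"
    have R: "\<rho> \<le> R" "r < R" "0 < R" "r' < R" using hR \<rho> r'\<rho> by (auto simp: \<rho>_def)
    obtain R2 where R2: "R < R2" "ball 0 R2 \<subseteq> S" using ball_in_open[OF hS(1,2) R(3)] by blast
    define R1 where "R1 = min R2 (R^2 / r)"
    have RR1: "R < R1" using R2 R assms by (simp add: R1_def less_divide_eq power2_eq_square)
    have rR1: "r * R1 \<le> R^2"
    proof -
      have "R1 \<le> R^2 / r" by (simp add: R1_def)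
      then show ?thesis using assms by (simp add: le_divide_eq mult.commute)
    qed
    have holf: "f holomorphic_on ball 0 R1"
      using hS(3) by (rule holomorphic_on_subset) (use R2 in \<open>auto simp: R1_def\<close>)
    have holg: "g holomorphic_on ball 0 R1" unfolding g_def by (intro holomorphic_intros holf)
    have witg: "\<exists>z\<in>ball 0 R1. g z \<noteq> 0"
    proof (rule ccontr)
      assume "\<not> ?thesis"
      then have z0: "\<And>z. z \<in> ball 0 R1 \<Longrightarrow> g z = 0" by auto
      obtain z0 where z0w: "z0 \<in> ball 0 1" "f z0 \<noteq> poly P z0" using wit by auto
      have holg1: "g holomorphic_on ball 0 1" unfolding g_def by (intro holomorphic_intros hf)
      have m0: "0 < min 1 R1" using RR1 R by simp
      have msub: "ball 0 (min 1 R1) \<subseteq> ball 0 1" by (rule subset_ball) simp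
      have "g z0 = (\<lambda>_. 0::complex) z0"
        by (rule analytic_continuation_open[OF open_ball open_ball _ connected_ball msub holg1 holomorphic_on_const])
           (use m0 z0 z0w in auto)
      then show False using z0w by (simp add: g_def)
    qed
    define cR where "cR = R * (r' + r) / (R^2 - r * r')"
    have denR: "0 < R^2 - r * r'"
    proof -
      have "r * r' < R * R" using R r'0 assms by (intro mult_strict_mono) auto
      then show ?thesis by (simp add: power2_eq_square)
    qed
    have cR0: "0 \<le> cR" using denR R r'0 assms by (simp add: cR_def)
    have cb: "R * norm (z - w) \<le> cR * norm (complex_of_real (R^2) - cnj w * z)"
      if "norm w \<le> r" "norm z \<le> r'" for w z
    proof -
      have "norm (cnj w * z) \<le> r * r'" using that assms r'0 by (simp add: norm_mult mult_mono')
      then have "R^2 - r * r' \<le> norm (complex_of_real (R^2) - cnj w * z)"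
      proof -
        have "norm (complex_of_real (R^2)) = R^2" by (simp only: norm_of_real) simp
        then show ?thesis using norm_triangle_ineq2[of "complex_of_real (R^2)" "cnj w * z"] \<open>norm (cnj w * z) \<le> r * r'\<close>
          by linarith
      qed
      then have "cR * (R^2 - r * r') \<le> cR * norm (complex_of_real (R^2) - cnj w * z)"
        using cR0 by (rule mult_left_mono)
      moreover have "cR * (R^2 - r * r') = R * (r' + r)" using denR by (simp add: cR_def)
      moreover have "R * norm (z - w) \<le> R * (r' + r)"
        using that R norm_triangle_ineq4[of z w] by (intro mult_left_mono) auto
      ultimately show ?thesis by linarith
    qed
    define Mf where "Mf = max_mod R f"
    define Mg where "Mg = max_mod R g"
    have sphS: "sphere 0 R \<subseteq> ball 0 R1" using RR1 by auto
    have contf: "continuous_on (sphere 0 R) f"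
      using holf sphS holomorphic_on_imp_continuous_on holomorphic_on_subset by blast
    have contg: "continuous_on (sphere 0 R) g"
      using holg sphS holomorphic_on_imp_continuous_on holomorphic_on_subset by blast
    have fM: "norm (f u) \<le> Mf" if "u \<in> sphere 0 R" for u
      using max_mod_upper[OF contf that] by (simp add: Mf_def)
    have gM: "norm (g u) \<le> Mg" if "u \<in> sphere 0 R" for u
      using max_mod_upper[OF contg that] by (simp add: Mg_def)
    have Mf0: "0 \<le> Mf" using fM[of "complex_of_real R"] R by (auto intro: order_trans[OF norm_ge_zero])
    have Mg0: "0 \<le> Mg" using gM[of "complex_of_real R"] R by (auto intro: order_trans[OF norm_ge_zero])
    have gsmall: "norm (g z) \<le> cR ^ N * Mg" if "z \<in> cball 0 r'" for z
    proof -
      have "norm (g z) \<le> cR ^ zero_count g (cball 0 r) * Mg"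
        by (rule key[where g=g and m="card {z\<in>cball 0 r. g z = 0}" and B=Mg and z=z and R=R and Rb=R1
              and r=r and r'=r' and c=cR])
           (use assms RR1 rR1 r'0 R cR0 cb holg witg gM that in auto)
      then show ?thesis using hN by (simp add: g_def)
    qed
    have fsmall: "norm (f z) \<le> Mf" if "z \<in> cball 0 r'" for z
      by (rule max_mod_ball[of f "ball 0 R1" R Mf z]) (use holf RR1 R fM that in auto)
    have Psmall: "norm (poly P z) \<le> Mf + cR ^ N * Mg" if "z \<in> cball 0 r'" for z
    proof -
      have "poly P z = f z - g z" by (simp add: g_def)
      then have "norm (poly P z) \<le> norm (f z) + norm (g z)" by (metis norm_triangle_ineq4)
      then show ?thesis using fsmall[OF that] gsmall[OF that] by linarith
    qed
    define X where "X = (R / r') ^ n"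
    have X1: "1 \<le> X" using R r'0 by (simp add: X_def one_le_power)
    have Pbig: "norm (poly P u) \<le> X * (Mf + cR ^ N * Mg)" if "u \<in> sphere 0 R" for u
      unfolding X_def by (rule bernstein_walsh[OF dP r'0]) (use R Psmall that in auto)
    have "max_mod R g \<le> Mf + X * (Mf + cR ^ N * Mg)"
    proof (rule max_mod_least)
      fix u :: complex assume u: "u \<in> sphere 0 R"
      have "norm (g u) \<le> norm (f u) + norm (poly P u)" by (simp add: g_def norm_triangle_ineq4)
      then show "norm (g u) \<le> Mf + X * (Mf + cR ^ N * Mg)" using fM[OF u] Pbig[OF u] by linarith
    qed (use R in auto)
    then have Mg_le: "Mg \<le> Mf + X * (Mf + cR ^ N * Mg)" by (simp add: Mg_def)
    define R' where "R' = max R 1"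
    have cRc: "cR \<le> c"
      unfolding cR_def c_def
    proof (rule frac_le_cross[OF denR den])
      have "R * (\<rho>^2 - r * r') \<le> \<rho> * (R^2 - r * r')"
      proof -
        have "0 \<le> (R - \<rho>) * (R * \<rho> + r * r')" using R \<rho> r'0 assms by (intro mult_nonneg_nonneg) auto
        then show ?thesis by (simp add: power2_eq_square algebra_simps)
      qed
      then have "(r' + r) * (R * (\<rho>^2 - r * r')) \<le> (r' + r) * (\<rho> * (R^2 - r * r'))"
        using r'0 assms by (intro mult_left_mono) auto
      then show "R * (r' + r) * (\<rho>^2 - r * r') \<le> \<rho> * (r' + r) * (R^2 - r * r')"
        by (simp add: algebra_simps)
    qed
    have cRR': "cR * R' \<le> c"
    proof (cases "R \<le> 1")
      case True
      then show ?thesis using cRc by (simp add: R'_def)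
    next
      case False
      have "cR * R \<le> \<rho> * c"
        unfolding cR_def c_def
      proof -
        have "R * (r' + r) / (R^2 - r * r') * R = (R * R) * (r' + r) / (R^2 - r * r')" by simp
        also have "\<dots> \<le> (\<rho> * \<rho>) * (r' + r) / (\<rho>^2 - r * r')"
        proof (rule frac_le_cross[OF denR den])
          have "\<rho>^2 * (r * r') \<le> R^2 * (r * r')"
            using R \<rho> r'0 assms by (intro mult_right_mono power_mono) auto
          then have "(R * R) * (\<rho>^2 - r * r') \<le> (\<rho> * \<rho>) * (R^2 - r * r')"
            by (simp add: power2_eq_square algebra_simps)
          then have "(r' + r) * ((R * R) * (\<rho>^2 - r * r')) \<le> (r' + r) * ((\<rho> * \<rho>) * (R^2 - r * r'))"
            using r'0 assms by (intro mult_left_mono) auto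
          then show "R * R * (r' + r) * (\<rho>\<^sup>2 - r * r') \<le> \<rho> * \<rho> * (r' + r) * (R\<^sup>2 - r * r')"
            by (simp add: algebra_simps)
        qed
        also have "\<dots> = \<rho> * (\<rho> * (r' + r) / (\<rho>^2 - r * r'))" by simp
        finally show "R * (r' + r) / (R^2 - r * r') * R \<le> \<rho> * (\<rho> * (r' + r) / (\<rho>^2 - r * r'))" .
      qed
      also have "\<dots> \<le> c" using \<rho> c0 by (simp add: mult_left_le_one_le)
      finally show ?thesis using False by (simp add: R'_def)
    qed
    have jnk: "real j * (real n + real k) \<le> real N"
    proof -
      have "real n + real k \<le> 2 * real k" using nk by simp
      then have "real j * (real n + real k) \<le> real j * (2 * real k)" by (intro mult_left_mono) auto
      also have "\<dots> \<le> real j * (2 * (\<delta> * real N))" using kd by (intro mult_left_mono) auto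
      also have "\<dots> = real N" using j0 by (simp add: \<delta>_def)
      finally show ?thesis .
    qed
    have N2: "2 * n + 1 \<le> N"
    proof -
      have "2 * (real n + 1) \<le> A * (real n + 1)" by (intro mult_right_mono) (auto simp: A_def)
      then have "real (2 * n + 1) \<le> real N" using NA by simp
      then show ?thesis by (simp only: of_nat_le_iff)
    qed
    have Nmm: "mm \<le> N"
    proof -
      have "real mm * 1 \<le> A * (real n + 1)" by (intro mult_mono) (auto simp: A_def)
      then have "real mm \<le> real N" using NA by simp
      then show ?thesis by (simp only: of_nat_le_iff)
    qed
    have num1: "4 * cR^N * R^n * R'^(n+1) \<le> t^(2*N) * r'^(n+k)"
      and num2: "(R/r')^n * cR^N \<le> 1/4"
      using numeric[OF cR0 cRc cRR' R(3) _ t j r'1 jnk N2 mm Nmm] by (auto simp: R'_def)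
    have Mg_bd: "Mg \<le> 4 * X * Mf"
    proof -
      have "X * cR^N * Mg \<le> (1/4) * Mg" using num2 Mg0 by (intro mult_right_mono) (auto simp: X_def)
      then have "Mg \<le> Mf + X * Mf + (1/4) * Mg" using Mg_le by (simp add: algebra_simps)
      moreover have "1 * Mf \<le> X * Mf" using X1 Mf0 by (rule mult_right_mono)
      moreover have "0 \<le> X * Mf" using X1 Mf0 by simp
      ultimately show ?thesis by linarith
    qed
    have tc: "taylor_coeff f k = taylor_coeff g k"
      unfolding g_def by (rule taylor_coeff_sub_poly[symmetric, of f "ball 0 R1"]) (use holf RR1 R dP nk in auto)
    have cauchy: "norm ((deriv ^^ k) g 0) \<le> fact k * (cR ^ N * Mg) / r' ^ k"
    proof (rule Cauchy_inequality)
      show "g holomorphic_on ball 0 r'" using holg by (rule holomorphic_on_subset) (use R RR1 in auto)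
      show "continuous_on (cball 0 r') g"
      proof -
        have "cball 0 r' \<subseteq> ball 0 R1" using R RR1 by auto
        then show ?thesis using continuous_on_subset[OF holomorphic_on_imp_continuous_on[OF holg]] by blast
      qed
      show "0 < r'" by (rule r'0)
    next
      fix x :: complex assume "norm (0 - x) = r'"
      then show "norm (g x) \<le> cR ^ N * Mg" using gsmall by auto
    qed
    have "norm (taylor_coeff f k) = norm (taylor_coeff g k)" by (simp only: tc)
    also have "\<dots> = norm ((deriv ^^ k) g 0) / fact k"
      by (simp add: taylor_coeff_def norm_divide)
    also have "\<dots> \<le> (cR ^ N * Mg) / r' ^ k"
      using cauchy by (simp add: divide_le_eq field_simps)
    also have "\<dots> \<le> (cR ^ N * (4 * X * Mf)) / r' ^ k"
      using Mg_bd cR0 r'0 by (intro divide_right_mono mult_left_mono) auto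
    also have "\<dots> \<le> Mf / R'^(n+1) * (t^2)^N"
    proof -
      have R'0: "0 < R'" by (simp add: R'_def)
      have "(cR ^ N * (4 * X * Mf)) / r' ^ k = (4 * cR^N * R^n * R'^(n+1)) * Mf / (r'^(n+k) * R'^(n+1))"
        using R'0 r'0 by (simp add: X_def power_divide power_add field_simps)
      also have "\<dots> \<le> (t^(2*N) * r'^(n+k)) * Mf / (r'^(n+k) * R'^(n+1))"
        using num1 Mf0 R'0 r'0 by (intro divide_right_mono mult_right_mono) auto
      also have "\<dots> = Mf / R'^(n+1) * (t^2)^N" using r'0 by (simp add: power_mult)
      finally show ?thesis .
    qed
    finally show ?thesis by (simp add: Mf_def R'_def)
  qed
  have P1: "1 \<le> A" by (simp add: A_def)
  have P2: "0 < t^2" using t by simp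
  have P3: "t^2 < 1" using t by (simp add: power_less_one_iff)
  have P4: "0 < \<delta>" using j0 by (simp add: \<delta>_def)
  show ?thesis
    apply (rule exI[of _ A], rule exI[of _ "t^2"], rule exI[of _ \<delta>])
    apply (intro conjI P1 P2 P3 P4 allI impI)
    apply (elim exE conjE)
    apply (rule main; assumption)
    done
qed


end
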